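(* Let $X$ be a hyperbolic approximation of $Z$. Any two vertices $v,v'\in V$ can be joined by a geodesic $v=v_0,v_1,\dots,v_{n+1}=v'$ (where $n+1=|vv'|$) such that $\ell(v_i)<\max\{\ell(v_{i-1}),\ell(v_{i+1})\}$ for all $1\le i\le n$.
   Context: Hyperbolic approximation: let $(Z,d)$ be a bounded metric space with at least two points and fix $0<r\le1/6$. Let $k_0$ be the largest integer with $\operatorname{diam}Z<r^{k_0}$. For each integer $k\ge k_0$ choose a maximal $r^k$-separated subset $V_k\subset Z$. Vertex set $V=\bigsqcup_{k\ge k_0}V_k$ (disjoint union), level $\ell(v)=k$ for $v\in V_k$, ball $B(v)=\{z:d(z,v)<2r^k\}$ with closure $\overline B(v)$. Edges: $v,v'$ of equal level with $\overline B(v)\cap\overline B(v')\neq\emptyset$ (horizontal), or levels differing by one with the ball of the higher-level vertex contained in the ball of the lower-level one (radial). Path metric with unit edges, denoted $|vv'|$. A geodesic between vertices is a vertex sequence $v_0,\dots,v_N$ with consecutive vertices adjacent and $N=|v_0v_N|$. *)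

theory Defs
  imports "HOL-Analysis.Analysis"
begin

text \<open>Hyperbolic approximation of a bounded metric space Z (a subset of a metric space type,
with the induced metric). Vertices are pairs (k, z) with z in the chosen net V k at level k.\<close>

definition HA_k0 :: "'a::metric_space set \<Rightarrow> real \<Rightarrow> int" where
  "HA_k0 Z r = (GREATEST k::int. diameter Z < r powi k)"

definition separated :: "real \<Rightarrow> 'a::metric_space set \<Rightarrow> bool" where
  "separated s A \<longleftrightarrow> (\<forall>x\<in>A. \<forall>y\<in>A. x \<noteq> y \<longrightarrow> s \<le> dist x y)"

definition maximal_separated :: "'a::metric_space set \<Rightarrow> real \<Rightarrow> 'a set \<Rightarrow> bool" where
  "maximal_separated Z s A \<longleftrightarrow> A \<subseteq> Z \<and> separated s A \<and>
     (\<forall>B. A \<subseteq> B \<and> B \<subseteq> Z \<and> separated s B \<longrightarrow> B = A)"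

definition HA_verts :: "'a::metric_space set \<Rightarrow> real \<Rightarrow> (int \<Rightarrow> 'a set) \<Rightarrow> (int \<times> 'a) set" where
  "HA_verts Z r V = {(k, z). HA_k0 Z r \<le> k \<and> z \<in> V k}"

definition HA_ball :: "'a::metric_space set \<Rightarrow> real \<Rightarrow> int \<times> 'a \<Rightarrow> 'a set" where
  "HA_ball Z r v = {z \<in> Z. dist z (snd v) < 2 * r powi (fst v)}"

definition HA_cball :: "'a::metric_space set \<Rightarrow> real \<Rightarrow> int \<times> 'a \<Rightarrow> 'a set" where
  "HA_cball Z r v = Z \<inter> closure (HA_ball Z r v)"

definition HA_edge :: "'a::metric_space set \<Rightarrow> real \<Rightarrow> (int \<Rightarrow> 'a set) \<Rightarrow> int \<times> 'a \<Rightarrow> int \<times> 'a \<Rightarrow> bool" where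
  "HA_edge Z r V v w \<longleftrightarrow> v \<in> HA_verts Z r V \<and> w \<in> HA_verts Z r V \<and> v \<noteq> w \<and>
     ((fst v = fst w \<and> HA_cball Z r v \<inter> HA_cball Z r w \<noteq> {}) \<or>
      (fst w = fst v + 1 \<and> HA_ball Z r w \<subseteq> HA_ball Z r v) \<or>
      (fst v = fst w + 1 \<and> HA_ball Z r v \<subseteq> HA_ball Z r w))"

definition HA_path :: "'a::metric_space set \<Rightarrow> real \<Rightarrow> (int \<Rightarrow> 'a set) \<Rightarrow> (int \<times> 'a) list \<Rightarrow> bool" where
  "HA_path Z r V ps \<longleftrightarrow> ps \<noteq> [] \<and> set ps \<subseteq> HA_verts Z r V \<and>
     (\<forall>i. Suc i < length ps \<longrightarrow> HA_edge Z r V (ps ! i) (ps ! Suc i))"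

definition HA_dist :: "'a::metric_space set \<Rightarrow> real \<Rightarrow> (int \<Rightarrow> 'a set) \<Rightarrow> int \<times> 'a \<Rightarrow> int \<times> 'a \<Rightarrow> nat" where
  "HA_dist Z r V v w = (LEAST n. \<exists>ps. HA_path Z r V ps \<and> hd ps = v \<and> last ps = w \<and> length ps = Suc n)"

end

theory Submission
  imports Defs
begin

locale HAc =
  fixes Z :: "'a::metric_space set" and r :: real and V :: "int \<Rightarrow> 'a set"
  assumes bZ: "bounded Z"
    and two: "\<exists>x\<in>Z. \<exists>y\<in>Z. x \<noteq> y"
    and r0: "0 < r" and r6: "r \<le> 1/6"
    and ms: "\<forall>k. HA_k0 Z r \<le> k \<longrightarrow> maximal_separated Z (r powi k) (V k)"
begin

abbreviation "k0 \<equiv> HA_k0 Z r"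
abbreviation "verts \<equiv> HA_verts Z r V"
abbreviation "edge \<equiv> HA_edge Z r V"
abbreviation "hball \<equiv> HA_ball Z r"
abbreviation "hcball \<equiv> HA_cball Z r"

lemma k0_prop: "diameter Z < r powi k0"
proof -
  obtain x y where xy: "x \<in> Z" "y \<in> Z" "x \<noteq> y" using two by blast
  have dpos: "0 < diameter Z"
    using diameter_bounded_bound[OF bZ xy(1,2)] xy(3) by (metis dist_pos_lt order_less_le_trans)
  obtain n where n: "r ^ n < diameter Z" using real_arch_pow_inv[OF dpos, of r] r0 r6 by auto
  obtain m where m: "diameter Z < (1/r) ^ m" using real_arch_pow[of "1/r"] r0 r6 by (auto simp: field_simps)
  define P where "P = (\<lambda>k::int. diameter Z < r powi k)"
  have Pm: "P (- int m)" unfolding P_def using m by (simp add: power_int_minus power_divide field_simps)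
  have bnd: "k \<le> int n" if "P k" for k
  proof (rule ccontr)
    assume "\<not> k \<le> int n"
    hence "r powi k \<le> r powi (int n)" using r0 r6
      by (intro power_int_decreasing) auto
    thus False using that n unfolding P_def by simp
  qed
  define S where "S = {k. P k \<and> - int m \<le> k}"
  have "S \<subseteq> {- int m..int n}" unfolding S_def using bnd by auto
  hence fS: "finite S" using finite_subset by blast
  have neS: "S \<noteq> {}" unfolding S_def using Pm by auto
  have PM: "P (Max S)" using Max_in[OF fS neS] unfolding S_def by auto
  have "Greatest P = Max S"
  proof (rule Greatest_equality[where P=P, OF PM])
    fix y assume "P y"
    show "y \<le> Max S"
    proof (cases "- int m \<le> y")
      case True thus ?thesis using Max_ge[OF fS] \<open>P y\<close> unfolding S_def by auto
    next
      case False thus ?thesis using Max_ge[OF fS, of "- int m"] Pm unfolding S_def by auto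
    qed
  qed
  thus ?thesis using PM unfolding P_def HA_k0_def by simp
qed

lemma verts_iff: "v \<in> verts \<longleftrightarrow> k0 \<le> fst v \<and> snd v \<in> V (fst v)"
  by (cases v) (simp add: HA_verts_def)

lemma Vsub: "k0 \<le> k \<Longrightarrow> V k \<subseteq> Z"
  using ms by (simp add: maximal_separated_def)

lemma sepV: "k0 \<le> k \<Longrightarrow> separated (r powi k) (V k)"
  using ms by (simp add: maximal_separated_def)

lemma rpos: "0 < r powi k"
  using r0 by simp

lemma near:
  assumes "k0 \<le> k" "z \<in> Z"
  shows "\<exists>a\<in>V k. dist z a < r powi k"
proof (rule ccontr)
  assume H: "\<not> ?thesis"
  have "separated (r powi k) (insert z (V k))"
    using sepV[OF assms(1)] H unfolding separated_def
    by (auto simp: dist_commute not_less)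
  moreover have "insert z (V k) \<subseteq> Z" using Vsub[OF assms(1)] assms(2) by auto
  ultimately have "insert z (V k) = V k"
    using ms assms(1) unfolding maximal_separated_def by blast
  hence "z \<in> V k" by auto
  thus False using H rpos[of k] by force
qed

lemma root_unique:
  assumes "z \<in> V k0" "z' \<in> V k0" shows "z = z'"
proof (rule ccontr)
  assume "z \<noteq> z'"
  hence "r powi k0 \<le> dist z z'" using sepV[of k0] assms unfolding separated_def by auto
  moreover have "dist z z' \<le> diameter Z"
    using diameter_bounded_bound[OF bZ] Vsub[of k0] assms by auto
  ultimately show False using k0_prop by simp
qed

lemma root_exists: "\<exists>z. z \<in> V k0"
proof (rule ccontr)
  assume H: "\<not> ?thesis"
  obtain x where x: "x \<in> Z" using two by blast
  have "separated (r powi k0) {x}" unfolding separated_def by auto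
  hence "{x} = V k0" using ms x H unfolding maximal_separated_def by blast
  thus False using H by auto
qed

lemma ball_mono:
  assumes "dist (snd u) (snd p) + 2 * r powi fst u \<le> 2 * r powi fst p"
  shows "hball u \<subseteq> hball p"
proof
  fix z assume "z \<in> hball u"
  hence z: "z \<in> Z" "dist z (snd u) < 2 * r powi fst u" unfolding HA_ball_def by auto
  have "dist z (snd p) \<le> dist z (snd u) + dist (snd u) (snd p)" by (rule dist_triangle)
  thus "z \<in> hball p" using z assms unfolding HA_ball_def by auto
qed

lemma cball_dist:
  assumes "z \<in> hcball u" shows "dist z (snd u) \<le> 2 * r powi fst u"
proof -
  have "hball u \<subseteq> cball (snd u) (2 * r powi fst u)"
    unfolding HA_ball_def by (auto simp: dist_commute)
  hence "closure (hball u) \<subseteq> cball (snd u) (2 * r powi fst u)"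
    by (simp add: closure_minimal)
  thus ?thesis using assms unfolding HA_cball_def by (auto simp: dist_commute)
qed

lemma horiz_dist:
  assumes "hcball u \<inter> hcball w \<noteq> {}" "fst u = fst w"
  shows "dist (snd u) (snd w) \<le> 4 * r powi fst u"
proof -
  obtain z where "z \<in> hcball u" "z \<in> hcball w" using assms by auto
  hence "dist z (snd u) \<le> 2 * r powi fst u" "dist z (snd w) \<le> 2 * r powi fst u"
    using cball_dist[of z u] cball_dist[of z w] assms(2) by auto
  moreover have "dist (snd u) (snd w) \<le> dist z (snd u) + dist z (snd w)"
    by (rule dist_triangle3)
  ultimately show ?thesis by linarith
qed

lemma center_in_ball: "u \<in> verts \<Longrightarrow> snd u \<in> hball u"
  using Vsub rpos unfolding verts_iff HA_ball_def by force

lemma ball_cball: "hball u \<subseteq> hcball u"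
  unfolding HA_cball_def using closure_subset[of "hball u"] by (auto simp: HA_ball_def)

lemma cball_mono: "hball u \<subseteq> hball p \<Longrightarrow> hcball u \<subseteq> hcball p"
  unfolding HA_cball_def using closure_mono by blast

lemma pw: "r powi k = r * r powi (k - 1)"
  using power_int_add_1'[of r "k - 1"] r0 by simp

lemma pw2: "r * r powi (k - 1) \<le> r powi (k - 1) / 6"
  using mult_right_mono[OF r6, of "r powi (k - 1)"] rpos[of "k - 1"] by simp

lemma parent:
  assumes "u \<in> verts" "k0 < fst u"
  shows "\<exists>p. p \<in> verts \<and> fst p = fst u - 1 \<and> dist (snd u) (snd p) < r powi (fst u - 1)"
proof -
  have "snd u \<in> Z" using assms(1) Vsub unfolding verts_iff by blast
  then obtain a where "a \<in> V (fst u - 1)" "dist (snd u) a < r powi (fst u - 1)"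
    using near[of "fst u - 1" "snd u"] assms(2) by auto
  thus ?thesis using assms(2) by (intro exI[of _ "(fst u - 1, a)"]) (auto simp: verts_iff)
qed

lemma parent_ball:
  assumes "fst p = fst u - 1" "dist (snd u) (snd p) < r powi (fst u - 1)"
  shows "hball u \<subseteq> hball p"
proof (rule ball_mono)
  have "r powi fst u = r * r powi (fst u - 1)" by (rule pw)
  moreover have "r powi fst p = r powi (fst u - 1)" using assms by simp
  ultimately show "dist (snd u) (snd p) + 2 * r powi fst u \<le> 2 * r powi fst p"
    using assms pw2[of "fst u"] rpos[of "fst u - 1"] by linarith
qed

lemma parent_ball4:
  assumes "fst p = fst u - 1" "dist (snd u) (snd b) \<le> 4 * r powi fst u"
    "dist (snd b) (snd p) < r powi (fst u - 1)"
  shows "hball u \<subseteq> hball p"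
proof (rule ball_mono)
  have "r powi fst u = r * r powi (fst u - 1)" by (rule pw)
  moreover have "dist (snd u) (snd p) \<le> dist (snd u) (snd b) + dist (snd b) (snd p)"
    by (rule dist_triangle)
  moreover have "r powi fst p = r powi (fst u - 1)" using assms by simp
  ultimately show "dist (snd u) (snd p) + 2 * r powi fst u \<le> 2 * r powi fst p"
    using assms pw2[of "fst u"] rpos[of "fst u - 1"] by linarith
qed

lemma edge_sym: "edge u w \<Longrightarrow> edge w u"
  unfolding HA_edge_def by auto

lemma path_iff: "HA_path Z r V ps \<longleftrightarrow> ps \<noteq> [] \<and> set ps \<subseteq> verts \<and> successively edge ps"
  by (simp add: HA_path_def successively_conv_nth)

lemma edge_verts: "edge u w \<Longrightarrow> u \<in> verts \<and> w \<in> verts \<and> u \<noteq> w"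
  unfolding HA_edge_def by auto

lemma improve:
  assumes ab: "edge a b" and bc: "edge b c" and la: "fst a \<le> fst b" and lc: "fst c \<le> fst b"
    and ac: "a \<noteq> c" and nac: "\<not> edge a c"
  shows "\<exists>x. edge a x \<and> edge x c \<and> fst x < fst b"
proof -
  have va: "a \<in> verts" and vb: "b \<in> verts" and vc: "c \<in> verts" and nab: "a \<noteq> b" and nbc: "b \<noteq> c"
    using edge_verts[OF ab] edge_verts[OF bc] by auto
  have A: "(fst a = fst b \<and> hcball a \<inter> hcball b \<noteq> {}) \<or> (fst b = fst a + 1 \<and> hball b \<subseteq> hball a)"
    using ab la unfolding HA_edge_def by auto
  have C: "(fst c = fst b \<and> hcball b \<inter> hcball c \<noteq> {}) \<or> (fst b = fst c + 1 \<and> hball b \<subseteq> hball c)"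
    using bc lc unfolding HA_edge_def by auto
  show ?thesis
  proof (cases "fst b = fst a + 1")
    case Ta: True
    hence Ba: "hball b \<subseteq> hball a" using A by auto
    show ?thesis
    proof (cases "fst b = fst c + 1")
      case True
      hence "hball b \<subseteq> hball c" using C by auto
      hence "snd b \<in> hcball a \<inter> hcball c" using Ba center_in_ball[OF vb] ball_cball by blast
      hence "edge a c" using va vc ac Ta True unfolding HA_edge_def by auto
      thus ?thesis using nac by blast
    next
      case False
      hence Cc: "fst c = fst b" "hcball b \<inter> hcball c \<noteq> {}" using C by auto
      have "k0 < fst c" using Ta Cc va unfolding verts_iff by simp
      then obtain p where p: "p \<in> verts" "fst p = fst c - 1" "dist (snd c) (snd p) < r powi (fst c - 1)"
        using parent[OF vc] by blast
      have Bc: "hball c \<subseteq> hball p" using parent_ball[OF p(2,3)] .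
      have "hcball a \<inter> hcball p \<noteq> {}" using cball_mono[OF Ba] cball_mono[OF Bc] Cc(2) by blast
      show ?thesis
      proof (cases "p = a")
        case True
        hence "edge a c" using va vc ac Bc p(2) unfolding HA_edge_def by auto
        thus ?thesis using nac by blast
      next
        case False
        have "edge a p" using va p(1) False \<open>hcball a \<inter> hcball p \<noteq> {}\<close> Ta Cc p(2)
          unfolding HA_edge_def by auto
        moreover have "edge p c" using p vc Bc unfolding HA_edge_def by auto
        moreover have "fst p < fst b" using p(2) Cc by simp
        ultimately show ?thesis by blast
      qed
    qed
  next
    case Fa: False
    hence Aa: "fst a = fst b" "hcball a \<inter> hcball b \<noteq> {}" using A by auto
    show ?thesis
    proof (cases "fst b = fst c + 1")
      case Tc: True
      hence Bc: "hball b \<subseteq> hball c" using C by auto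
      have "k0 < fst a" using Tc Aa vc unfolding verts_iff by simp
      then obtain p where p: "p \<in> verts" "fst p = fst a - 1" "dist (snd a) (snd p) < r powi (fst a - 1)"
        using parent[OF va] by blast
      have Ba: "hball a \<subseteq> hball p" using parent_ball[OF p(2,3)] .
      have "hcball p \<inter> hcball c \<noteq> {}" using cball_mono[OF Ba] cball_mono[OF Bc] Aa(2) by blast
      show ?thesis
      proof (cases "p = c")
        case True
        hence "edge a c" using va vc ac Ba p(2) unfolding HA_edge_def by auto
        thus ?thesis using nac by blast
      next
        case False
        have "edge p c" using vc p(1) False \<open>hcball p \<inter> hcball c \<noteq> {}\<close> Tc Aa p(2)
          unfolding HA_edge_def by auto
        moreover have "edge a p" using p va Ba unfolding HA_edge_def by auto
        moreover have "fst p < fst b" using p(2) Aa by simp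
        ultimately show ?thesis by blast
      qed
    next
      case False
      hence Cc: "fst c = fst b" "hcball b \<inter> hcball c \<noteq> {}" using C by auto
      have "k0 < fst b"
      proof (rule ccontr)
        assume "\<not> k0 < fst b"
        hence "fst a = k0" "fst b = k0" using va vb Aa unfolding verts_iff by auto
        hence "snd a = snd b" using root_unique va vb unfolding verts_iff by metis
        thus False using nab \<open>fst a = k0\<close> \<open>fst b = k0\<close> by (simp add: prod_eq_iff)
      qed
      then obtain p where p: "p \<in> verts" "fst p = fst b - 1" "dist (snd b) (snd p) < r powi (fst b - 1)"
        using parent[OF vb] by blast
      have d1: "dist (snd a) (snd b) \<le> 4 * r powi fst a" using horiz_dist[OF Aa(2) Aa(1)] .
      have d2: "dist (snd c) (snd b) \<le> 4 * r powi fst c"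
        using horiz_dist[OF Cc(2)] Cc(1) by (simp add: dist_commute)
      have Ba: "hball a \<subseteq> hball p" using parent_ball4[of p a b] p Aa d1 by simp
      have Bc: "hball c \<subseteq> hball p" using parent_ball4[of p c b] p Cc d2 by simp
      have "edge a p" using va p Ba Aa unfolding HA_edge_def by auto
      moreover have "edge p c" using vc p Bc Cc unfolding HA_edge_def by auto
      moreover have "fst p < fst b" using p(2) by simp
      ultimately show ?thesis by blast
    qed
  qed
qed

abbreviation "hpath \<equiv> HA_path Z r V"

lemma from_root:
  assumes z0: "z0 \<in> V k0"
  shows "v \<in> verts \<Longrightarrow> \<exists>ps. hpath ps \<and> hd ps = (k0, z0) \<and> last ps = v"
proof (induction "nat (fst v - k0)" arbitrary: v)
  case 0
  have "k0 \<le> fst v" using 0(2) verts_iff by blast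
  hence "fst v = k0" using 0(1) by simp
  hence "v = (k0, z0)" using root_unique[OF z0] 0(2) unfolding verts_iff by (metis prod.collapse)
  thus ?case using 0(2) by (intro exI[of _ "[v]"]) (simp add: path_iff)
next
  case (Suc n)
  hence "k0 < fst v" by linarith
  then obtain p where p: "p \<in> verts" "fst p = fst v - 1" "dist (snd v) (snd p) < r powi (fst v - 1)"
    using parent[OF Suc(3)] by blast
  have "n = nat (fst p - k0)" using Suc(2) p(2) by linarith
  then obtain ps where ps: "hpath ps" "hd ps = (k0, z0)" "last ps = p" using Suc(1) p(1) by blast
  have "edge p v" using p Suc(3) parent_ball[OF p(2,3)] unfolding HA_edge_def by auto
  hence "hpath (ps @ [v])" using ps Suc(3) unfolding path_iff by (auto simp: successively_append_iff)
  moreover have "ps \<noteq> []" using ps(1) unfolding path_iff by simp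
  ultimately show ?case using ps by (intro exI[of _ "ps @ [v]"]) auto
qed

lemma connect:
  assumes "v \<in> verts" "w \<in> verts"
  shows "\<exists>ps. hpath ps \<and> hd ps = v \<and> last ps = w"
proof -
  obtain z0 where z0: "z0 \<in> V k0" using root_exists by blast
  obtain xs where xs: "hpath xs" "hd xs = (k0, z0)" "last xs = v" using from_root[OF z0 assms(1)] by blast
  obtain ys where ys: "hpath ys" "hd ys = (k0, z0)" "last ys = w" using from_root[OF z0 assms(2)] by blast
  have es: "(\<lambda>x y. edge y x) = edge" using edge_sym by blast
  have "successively (\<lambda>x y. edge y x) xs"
    using xs(1) unfolding path_iff by (auto intro: successively_mono edge_sym)
  hence rx: "hpath (rev xs)" using xs(1) unfolding path_iff by (simp add: successively_rev)
  obtain y ys' where yy: "ys = y # ys'" using ys(1) unfolding path_iff by (cases ys) auto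
  have "hpath (rev xs @ ys')"
  proof (cases ys')
    case Nil thus ?thesis using rx by simp
  next
    case (Cons y' ys'')
    have "edge y y'" "successively edge ys'" "set ys' \<subseteq> verts"
      using ys(1) yy Cons unfolding path_iff by auto
    moreover have "last (rev xs) = y" using xs ys yy unfolding path_iff by (simp add: last_rev)
    ultimately show ?thesis using rx Cons unfolding path_iff
      by (auto simp: successively_append_iff)
  qed
  moreover have "hd (rev xs @ ys') = v" using xs unfolding path_iff by (simp add: hd_rev)
  moreover have "last (rev xs @ ys') = w"
    using xs ys yy unfolding path_iff by (cases ys') (auto simp: last_rev)
  ultimately show ?thesis by blast
qed

lemma main:
  assumes "v \<in> verts" and "w \<in> verts"
  shows "\<exists>ps. hpath ps \<and> hd ps = v \<and> last ps = w \<and>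
           length ps = Suc (HA_dist Z r V v w) \<and>
           (\<forall>i. 0 < i \<and> Suc i < length ps \<longrightarrow>
              fst (ps ! i) < max (fst (ps ! (i - 1))) (fst (ps ! Suc i)))"
proof -
  define D where "D = HA_dist Z r V v w"
  define geo where "geo ps \<longleftrightarrow> hpath ps \<and> hd ps = v \<and> last ps = w \<and> length ps = Suc D" for ps
  define P where "P n \<longleftrightarrow> (\<exists>ps. hpath ps \<and> hd ps = v \<and> last ps = w \<and> length ps = Suc n)" for n
  have DL: "D = (LEAST n. P n)" unfolding D_def HA_dist_def P_def by simp
  obtain ps0 where ps0: "hpath ps0" "hd ps0 = v" "last ps0 = w" using connect[OF assms] by blast
  have "P (length ps0 - 1)" unfolding P_def using ps0 unfolding path_iff
    by (intro exI[of _ ps0]) auto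
  hence "P D" unfolding DL by (rule LeastI)
  hence "\<exists>ps. geo ps" unfolding P_def geo_def by blast
  then obtain g where "geo g" by blast
  define lsum where "lsum ps = sum_list (map (\<lambda>x. nat (fst x - k0)) ps)" for ps :: "(int \<times> 'a) list"
  obtain ps where geo: "geo ps" and mn: "\<And>qs. geo qs \<Longrightarrow> lsum ps \<le> lsum qs"
    using ex_has_least_nat[of geo g lsum] \<open>geo g\<close> by blast
  have short: "Suc D \<le> length qs" if "hpath qs" "hd qs = v" "last qs = w" for qs
  proof -
    have "P (length qs - 1)" unfolding P_def using that unfolding path_iff
      by (intro exI[of _ qs]) auto
    hence "D \<le> length qs - 1" unfolding DL by (rule Least_le)
    moreover have "qs \<noteq> []" using that(1) unfolding path_iff by simp
    ultimately show ?thesis by (cases qs) auto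
  qed
  have "\<forall>i. 0 < i \<and> Suc i < length ps \<longrightarrow>
              fst (ps ! i) < max (fst (ps ! (i - 1))) (fst (ps ! Suc i))"
  proof (intro allI impI, rule ccontr)
    fix i assume i: "0 < i \<and> Suc i < length ps"
      and nc: "\<not> fst (ps ! i) < max (fst (ps ! (i - 1))) (fst (ps ! Suc i))"
    define a where "a = ps ! (i - 1)"
    define b where "b = ps ! i"
    define c where "c = ps ! Suc i"
    define pre where "pre = take (i - 1) ps"
    define post where "post = drop (Suc (Suc i)) ps"
    have "drop (i - 1) ps = ps ! (i - 1) # drop (Suc (i - 1)) ps" using i
      by (intro Cons_nth_drop_Suc[symmetric]) auto
    hence d1: "drop (i - 1) ps = a # drop i ps" unfolding a_def using i by simp
    have "drop i ps = ps ! i # drop (Suc i) ps" using i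
      by (intro Cons_nth_drop_Suc[symmetric]) auto
    moreover have "drop (Suc i) ps = ps ! Suc i # drop (Suc (Suc i)) ps" using i
      by (intro Cons_nth_drop_Suc[symmetric]) auto
    ultimately have d2: "drop i ps = b # c # post" unfolding b_def c_def post_def by simp
    have "ps = take (i - 1) ps @ drop (i - 1) ps" by simp
    hence dec: "ps = pre @ a # b # c # post" unfolding pre_def d1 d2 .
    have hp: "hpath ps" and hd: "hd ps = v" and lst: "last ps = w" and len: "length ps = Suc D"
      using geo unfolding geo_def by auto
    have S: "pre = [] \<or> edge (last pre) a" "successively edge pre" "edge a b" "edge b c"
      "successively edge (c # post)" "set pre \<subseteq> verts" "set post \<subseteq> verts" "a \<in> verts" "c \<in> verts"
      using hp unfolding dec path_iff by (auto simp: successively_append_iff)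
    have la: "fst a \<le> fst b" and lc: "fst c \<le> fst b" using nc unfolding a_def b_def c_def by auto
    have ac: "a \<noteq> c"
    proof
      assume "a = c"
      define qs where "qs = pre @ a # post"
      have "hpath qs" using S \<open>a = c\<close> unfolding qs_def path_iff
        by (auto simp: successively_append_iff)
      moreover have "hd qs = v" using hd unfolding dec qs_def by (cases pre) auto
      moreover have "last qs = w" using lst \<open>a = c\<close> unfolding dec qs_def by (cases post) auto
      ultimately have "Suc D \<le> length qs" by (rule short)
      thus False using len unfolding dec qs_def by simp
    qed
    have nac: "\<not> edge a c"
    proof
      assume e: "edge a c"
      define qs where "qs = pre @ a # c # post"
      have "hpath qs" using S e unfolding qs_def path_iff
        by (auto simp: successively_append_iff)
      moreover have "hd qs = v" using hd unfolding dec qs_def by (cases pre) auto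
      moreover have "last qs = w" using lst unfolding dec qs_def by (cases post) auto
      ultimately have "Suc D \<le> length qs" by (rule short)
      thus False using len unfolding dec qs_def by simp
    qed
    obtain x where x: "edge a x" "edge x c" "fst x < fst b"
      using improve[OF S(3,4) la lc ac nac] by blast
    define qs where "qs = pre @ a # x # c # post"
    have "hpath qs" using S x edge_verts[OF x(1)] unfolding qs_def path_iff
      by (auto simp: successively_append_iff)
    moreover have "hd qs = v" using hd unfolding dec qs_def by (cases pre) auto
    moreover have "last qs = w" using lst unfolding dec qs_def by (cases post) auto
    moreover have "length qs = Suc D" using len unfolding dec qs_def by simp
    ultimately have "geo qs" unfolding geo_def by blast
    hence "lsum ps \<le> lsum qs" by (rule mn)
    moreover have "k0 \<le> fst x" using edge_verts[OF x(1)] verts_iff by blast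
    ultimately show False using x(3) unfolding dec qs_def lsum_def by simp
  qed
  thus ?thesis using geo unfolding geo_def D_def by blast
qed

end

theorem mainTheorem7:
  fixes Z :: "'a::metric_space set" and r :: real and V :: "int \<Rightarrow> 'a set"
  assumes "bounded Z"
    and "\<exists>x\<in>Z. \<exists>y\<in>Z. x \<noteq> y"
    and "0 < r" and "r \<le> 1/6"
    and "\<forall>k. HA_k0 Z r \<le> k \<longrightarrow> maximal_separated Z (r powi k) (V k)"
    and "v \<in> HA_verts Z r V" and "w \<in> HA_verts Z r V"
  shows "\<exists>ps. HA_path Z r V ps \<and> hd ps = v \<and> last ps = w \<and>
           length ps = Suc (HA_dist Z r V v w) \<and>
           (\<forall>i. 0 < i \<and> Suc i < length ps \<longrightarrow>
              fst (ps ! i) < max (fst (ps ! (i - 1))) (fst (ps ! Suc i)))"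
proof -
  interpret HAc Z r V using assms(1-5) by unfold_locales
  show ?thesis using main[OF assms(6,7)] .
qed

end
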